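(* For each $\gamma$ obtained from a Frobenius array $\mu\in\mathcal{F}(\beta)$ as described (which is an $S_\beta$-partition), the array $\pi$ obtained by subtracting $\lfloor\frac{m+2-i}{2}\rfloor$ from each entry in the $i$-th row of $\gamma$ ($1\le i\le m+1$) is an $S_{\beta}$-partition.
   Context: Let $\beta=(b_1,\ldots,b_m)$ be a composition of $d$ and set $r_i=b_1+\cdots+b_i$ ($r_0=0$). The poset $S_\beta$ is $\bigcup_{l=1}^{m}\{(i,j): l\le i\le l+1,\ r_{l-1}+1\le j\le r_l\}$ with $(i_1,j_1)\le(i_2,j_2)$ iff $i_1\le i_2$ and $j_1\le j_2$; it has $m+1$ rows, and with its natural labeling an $S_\beta$-partition is an order-reversing map $S_\beta\to\mathbb{N}$ (nonnegative integers). A Frobenius symbol with $d$ columns is a two-rowed array $\left(\begin{smallmatrix}x_1&\cdots&x_d\\ y_1&\cdots&y_d\end{smallmatrix}\right)$ with $x_1>\cdots>x_d\ge0$, $y_1>\cdots>y_d\ge0$; a column is positive if $x_i-y_i\ge1$ and negative if $x_i-y_i\le0$; parity blocks are maximal sets of contiguous columns of the same parity. Subtracting $d-1,d-2,\ldots,0$ from the entries of columns $1,\ldots,d$ in each row gives a Frobenius array $\mu$ (rows weakly decreasing, parities unchanged). $\mathcal{F}(\beta)$ is the set of Frobenius arrays with $d$ columns and $m$ parity blocks $B_1,\ldots,B_m$, where the last block $B_m$ is positive and $B_i$ has $b_i$ columns. From $\mu\in\mathcal{F}(\beta)$, $\gamma$ is built by interchanging top and bottom entries in each negative block to get $\hat\mu$,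 then placing the $(i,j)$-th entry $\hat\mu_{i,j}$ at position $(i+l,j)$ of $S_\beta$, where $r_l<j\le r_{l+1}$. It is known that $\gamma$ is an $S_\beta$-partition whose columns are weakly decreasing, and strictly decreasing in columns coming from positive blocks of $\mu$. *)

theory Defs
  imports Main
begin

text \<open>A composition beta = (b_1,...,b_m) of d is a list of positive naturals;
  m = length beta, d = sum_list beta, r i = b_1 + ... + b_i.\<close>

definition composition :: "nat list \<Rightarrow> bool" where
  "composition beta \<longleftrightarrow> (\<forall>b\<in>set beta. 0 < b)"

definition psum :: "nat list \<Rightarrow> nat \<Rightarrow> nat" where
  "psum beta i = sum_list (take i beta)"

definition S_beta :: "nat list \<Rightarrow> (nat \<times> nat) set" where
  "S_beta beta = {(i, j). \<exists>l\<in>{1..length beta}. l \<le> i \<and> i \<le> l + 1 \<and>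
       psum beta (l - 1) + 1 \<le> j \<and> j \<le> psum beta l}"

definition pos_le :: "nat \<times> nat \<Rightarrow> nat \<times> nat \<Rightarrow> bool" where
  "pos_le p q \<longleftrightarrow> fst p \<le> fst q \<and> snd p \<le> snd q"

text \<open>An S-partition (natural labeling): an order-reversing map S \<rightarrow> N.
  Given as an integer-valued map, it must take nonnegative values on S.\<close>
definition is_S_partition :: "(nat \<times> nat) set \<Rightarrow> (nat \<times> nat \<Rightarrow> int) \<Rightarrow> bool" where
  "is_S_partition S f \<longleftrightarrow> (\<forall>p\<in>S. 0 \<le> f p) \<and>
      (\<forall>p\<in>S. \<forall>q\<in>S. pos_le p q \<longrightarrow> f q \<le> f p)"

definition frobenius_array :: "nat \<Rightarrow> (nat \<Rightarrow> nat) \<Rightarrow> (nat \<Rightarrow> nat) \<Rightarrow> bool" where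
  "frobenius_array d x y \<longleftrightarrow>
     (\<forall>j j'. 1 \<le> j \<and> j \<le> j' \<and> j' \<le> d \<longrightarrow> x j' \<le> x j \<and> y j' \<le> y j)"

definition pos_col :: "(nat \<Rightarrow> nat) \<Rightarrow> (nat \<Rightarrow> nat) \<Rightarrow> nat \<Rightarrow> bool" where
  "pos_col x y j \<longleftrightarrow> y j + 1 \<le> x j"

text \<open>Membership in F(beta): the parity blocks of the array are exactly the
  consecutive column intervals {r_{l-1}+1..r_l} (constant parity inside each,
  parity changing between consecutive ones, so they are maximal), and the last
  block B_m is positive.\<close>
definition in_F :: "nat list \<Rightarrow> (nat \<Rightarrow> nat) \<Rightarrow> (nat \<Rightarrow> nat) \<Rightarrow> bool" where
  "in_F beta x y \<longleftrightarrow>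
     frobenius_array (sum_list beta) x y \<and>
     (\<forall>l\<in>{1..length beta}. \<forall>j j'.
        psum beta (l - 1) < j \<and> j \<le> psum beta l \<and>
        psum beta (l - 1) < j' \<and> j' \<le> psum beta l \<longrightarrow>
        (pos_col x y j \<longleftrightarrow> pos_col x y j')) \<and>
     (\<forall>l. 1 \<le> l \<and> l < length beta \<longrightarrow>
        (pos_col x y (psum beta l) \<longleftrightarrow> \<not> pos_col x y (psum beta l + 1))) \<and>
     (\<forall>j. psum beta (length beta - 1) < j \<and> j \<le> sum_list beta \<longrightarrow> pos_col x y j)"

definition blk :: "nat list \<Rightarrow> nat \<Rightarrow> nat" where
  "blk beta j = (LEAST l. 1 \<le> l \<and> j \<le> psum beta l)"

definition hat_top :: "(nat \<Rightarrow> nat) \<Rightarrow> (nat \<Rightarrow> nat) \<Rightarrow> nat \<Rightarrow> nat" where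
  "hat_top x y j = (if pos_col x y j then x j else y j)"
definition hat_bot :: "(nat \<Rightarrow> nat) \<Rightarrow> (nat \<Rightarrow> nat) \<Rightarrow> nat \<Rightarrow> nat" where
  "hat_bot x y j = (if pos_col x y j then y j else x j)"

text \<open>gamma: hat mu_{1,j} placed at (L, j), hat mu_{2,j} at (L+1, j), where
  column j lies in block L (i.e. r_{L-1} < j \<le> r_L); value 0 outside S_beta.\<close>
definition gamma :: "nat list \<Rightarrow> (nat \<Rightarrow> nat) \<Rightarrow> (nat \<Rightarrow> nat) \<Rightarrow> nat \<times> nat \<Rightarrow> nat" where
  "gamma beta x y p = (let i = fst p; j = snd p; L = blk beta j in
     if i = L then hat_top x y j else if i = L + 1 then hat_bot x y j else 0)"

definition pi_arr :: "nat list \<Rightarrow> (nat \<Rightarrow> nat) \<Rightarrow> (nat \<Rightarrow> nat) \<Rightarrow> nat \<times> nat \<Rightarrow> int" where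
  "pi_arr beta x y p =
     int (gamma beta x y p) - int ((length beta + 2 - fst p) div 2)"

end

theory Submission
  imports Defs
begin

lemma psum_mono: "i \<le> k \<Longrightarrow> psum beta i \<le> psum beta k"
proof -
  assume "i \<le> k"
  then have "take k beta = take i beta @ take (k - i) (drop i beta)"
    by (metis le_add_diff_inverse take_add)
  then show ?thesis unfolding psum_def by simp
qed

lemma psum_Suc: "l < length beta \<Longrightarrow> psum beta (Suc l) = psum beta l + beta ! l"
  unfolding psum_def by (simp add: take_Suc_conv_app_nth)

lemma psum_len: "psum beta (length beta) = sum_list beta"
  by (simp add: psum_def)

lemma psum_strict: "composition beta \<Longrightarrow> l < length beta \<Longrightarrow> psum beta l < psum beta (Suc l)"
  using psum_Suc[of l beta] nth_mem[of l beta] unfolding composition_def by auto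

lemma blk_eq:
  assumes "1 \<le> l" "psum beta (l-1) < j" "j \<le> psum beta l"
  shows "blk beta j = l"
  unfolding blk_def
proof (rule Least_equality)
  show "1 \<le> l \<and> j \<le> psum beta l" using assms by simp
next
  fix z assume z: "1 \<le> z \<and> j \<le> psum beta z"
  show "l \<le> z"
  proof (rule ccontr)
    assume "\<not> l \<le> z"
    then have "z \<le> l - 1" by simp
    then have "psum beta z \<le> psum beta (l-1)" by (rule psum_mono)
    then show False using z assms by simp
  qed
qed

lemma in_S: "(i,j) \<in> S_beta beta \<longleftrightarrow> (\<exists>l. 1 \<le> l \<and> l \<le> length beta \<and> l \<le> i \<and> i \<le> l+1
   \<and> psum beta (l-1) < j \<and> j \<le> psum beta l)"
  by (auto simp: S_beta_def)

lemma gamma_val: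
  assumes "1 \<le> l" "psum beta (l-1) < j" "j \<le> psum beta l"
  shows "gamma beta x y (i,j) = (if i = l then hat_top x y j else if i = l+1 then hat_bot x y j else 0)"
  using blk_eq[OF assms] by (simp add: gamma_def Let_def)

lemma pos_parity:
  assumes comp: "composition beta" and F: "in_F beta x y"
  shows "1 \<le> l \<Longrightarrow> l \<le> length beta \<Longrightarrow> psum beta (l-1) < j \<Longrightarrow> j \<le> psum beta l
     \<Longrightarrow> (pos_col x y j \<longleftrightarrow> even (length beta - l))"
proof -
  let ?m = "length beta"
  have F2: "\<And>l j j'. 1 \<le> l \<Longrightarrow> l \<le> ?m \<Longrightarrow> psum beta (l - 1) < j \<Longrightarrow> j \<le> psum beta l \<Longrightarrow>
        psum beta (l - 1) < j' \<Longrightarrow> j' \<le> psum beta l \<Longrightarrow> (pos_col x y j \<longleftrightarrow> pos_col x y j')"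
    using F unfolding in_F_def by (meson atLeastAtMost_iff)
  have F3: "\<And>l. 1 \<le> l \<Longrightarrow> l < ?m \<Longrightarrow> (pos_col x y (psum beta l) \<longleftrightarrow> \<not> pos_col x y (psum beta l + 1))"
    using F unfolding in_F_def by blast
  have F4: "\<And>j. psum beta (?m - 1) < j \<Longrightarrow> j \<le> sum_list beta \<Longrightarrow> pos_col x y j"
    using F unfolding in_F_def by blast
  have "\<forall>l j. ?m - l = k \<longrightarrow> 1 \<le> l \<longrightarrow> l \<le> ?m \<longrightarrow> psum beta (l-1) < j \<longrightarrow> j \<le> psum beta l
     \<longrightarrow> (pos_col x y j \<longleftrightarrow> even (?m - l))" for k
  proof (induction k)
    case 0
    then show ?case using F4 psum_len[of beta] by auto
  next
    case (Suc k)
    show ?case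
    proof (intro allI impI)
      fix l j assume a: "?m - l = Suc k" "1 \<le> l" "l \<le> ?m" "psum beta (l-1) < j" "j \<le> psum beta l"
      have lm: "l < ?m" using a by simp
      have s1: "psum beta l < psum beta (Suc l)" using psum_strict[OF comp lm] .
      have s0: "psum beta (l-1) < psum beta l" using psum_strict[OF comp, of "l-1"] a by simp
      have mk: "?m - Suc l = k" using a by simp
      have ih0: "pos_col x y (psum beta l + 1) \<longleftrightarrow> even (?m - Suc l)"
        by (rule Suc.IH[rule_format, of "Suc l" "psum beta l + 1"]) (use mk a lm s1 in auto)
      have ih: "pos_col x y (psum beta l + 1) \<longleftrightarrow> even k" using ih0 mk by simp
      have ev: "even (?m - l) \<longleftrightarrow> \<not> even k" using a by simp
      have f3: "pos_col x y (psum beta l) \<longleftrightarrow> \<not> pos_col x y (psum beta l + 1)" using F3[of l] a lm by simp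
      have c: "pos_col x y j \<longleftrightarrow> pos_col x y (psum beta l)"
        using F2[of l j "psum beta l"] a s0 by simp
      show "pos_col x y j \<longleftrightarrow> even (?m - l)" using c ih f3 ev by simp
    qed
  qed
  then show "1 \<le> l \<Longrightarrow> l \<le> ?m \<Longrightarrow> psum beta (l-1) < j \<Longrightarrow> j \<le> psum beta l
     \<Longrightarrow> (pos_col x y j \<longleftrightarrow> even (?m - l))" by blast
qed


lemma blk_unique:
  assumes comp: "composition beta"
    and "1 \<le> l" "psum beta (l-1) < j" "j \<le> psum beta l"
    and "1 \<le> l'" "psum beta (l'-1) < j" "j \<le> psum beta l'"
  shows "l = l'"
  using blk_eq[of l beta j] blk_eq[of l' beta j] assms by simp

lemma row_step:
  assumes comp: "composition beta" and F: "in_F beta x y"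
    and p: "(i,j) \<in> S_beta beta" and q: "(i,j') \<in> S_beta beta" and jj: "j \<le> j'"
  shows "gamma beta x y (i,j') \<le> gamma beta x y (i,j)"
proof -
  let ?m = "length beta"
  have F1: "\<And>j j'. 1 \<le> j \<Longrightarrow> j \<le> j' \<Longrightarrow> j' \<le> sum_list beta \<Longrightarrow> x j' \<le> x j \<and> y j' \<le> y j"
  proof -
    have "frobenius_array (sum_list beta) x y" using F unfolding in_F_def by simp
    then show "\<And>j j'. 1 \<le> j \<Longrightarrow> j \<le> j' \<Longrightarrow> j' \<le> sum_list beta \<Longrightarrow> x j' \<le> x j \<and> y j' \<le> y j"
      unfolding frobenius_array_def by blast
  qed
  have F2: "\<And>l j j'. 1 \<le> l \<Longrightarrow> l \<le> ?m \<Longrightarrow> psum beta (l - 1) < j \<Longrightarrow> j \<le> psum beta l \<Longrightarrow>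
        psum beta (l - 1) < j' \<Longrightarrow> j' \<le> psum beta l \<Longrightarrow> (pos_col x y j \<longleftrightarrow> pos_col x y j')"
    using F unfolding in_F_def by (meson atLeastAtMost_iff)
  obtain l where l: "1 \<le> l" "l \<le> ?m" "l \<le> i" "i \<le> l+1" "psum beta (l-1) < j" "j \<le> psum beta l"
    using p[unfolded in_S] by blast
  obtain l' where l': "1 \<le> l'" "l' \<le> ?m" "l' \<le> i" "i \<le> l'+1" "psum beta (l'-1) < j'" "j' \<le> psum beta l'"
    using q[unfolded in_S] by blast
  have jd: "j' \<le> sum_list beta" using l' psum_mono[of l' ?m beta] psum_len[of beta] by simp
  have j1: "1 \<le> j" using l by simp
  have mon: "x j' \<le> x j \<and> y j' \<le> y j" using F1[OF j1 jj jd] .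
  have ll: "l \<le> l'"
  proof (rule ccontr)
    assume "\<not> l \<le> l'"
    then have "l' \<le> l - 1" by simp
    then have "psum beta l' \<le> psum beta (l-1)" by (rule psum_mono)
    then show False using l l' jj by simp
  qed
  show ?thesis
  proof (cases "l = l'")
    case True
    have pp: "pos_col x y j \<longleftrightarrow> pos_col x y j'" using F2[of l j j'] l l' True by simp
    have g1: "gamma beta x y (i,j) = (if i = l then hat_top x y j else hat_bot x y j)"
      using gamma_val[of l beta j x y i] l by simp
    have g2: "gamma beta x y (i,j') = (if i = l then hat_top x y j' else hat_bot x y j')"
      using gamma_val[of l' beta j' x y i] l' True by simp
    have "hat_top x y j' \<le> hat_top x y j" "hat_bot x y j' \<le> hat_bot x y j"
      using pp mon unfolding hat_top_def hat_bot_def by auto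
    then show ?thesis using g1 g2 by simp
  next
    case False
    then have e: "l' = l + 1" "i = l + 1" using ll l l' by auto
    have pj: "pos_col x y j \<longleftrightarrow> even (?m - l)" using pos_parity[OF comp F l(1,2,5,6)] .
    have pj': "pos_col x y j' \<longleftrightarrow> even (?m - l')" using pos_parity[OF comp F l'(1,2,5,6)] .
    have "even (?m - l) \<longleftrightarrow> \<not> even (?m - l')" using e l' by auto
    then have pp: "pos_col x y j \<longleftrightarrow> \<not> pos_col x y j'" using pj pj' by simp
    have g1: "gamma beta x y (i,j) = hat_bot x y j"
      using gamma_val[of l beta j x y i] l e by simp
    have g2: "gamma beta x y (i,j') = hat_top x y j'"
      using gamma_val[of l' beta j' x y i] l' e by simp
    have "hat_top x y j' \<le> hat_bot x y j"
      using pp mon unfolding hat_top_def hat_bot_def by auto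
    then show ?thesis using g1 g2 by simp
  qed
qed

lemma col_step:
  assumes comp: "composition beta" and F: "in_F beta x y"
    and p: "(i,j) \<in> S_beta beta" and q: "(Suc i,j) \<in> S_beta beta"
  shows "pi_arr beta x y (Suc i,j) \<le> pi_arr beta x y (i,j)"
proof -
  let ?m = "length beta"
  obtain l where l: "1 \<le> l" "l \<le> ?m" "l \<le> i" "i \<le> l+1" "psum beta (l-1) < j" "j \<le> psum beta l"
    using p[unfolded in_S] by blast
  obtain l' where l': "1 \<le> l'" "l' \<le> ?m" "l' \<le> Suc i" "Suc i \<le> l'+1" "psum beta (l'-1) < j" "j \<le> psum beta l'"
    using q[unfolded in_S] by blast
  have "l = l'" using blk_unique[OF comp l(1,5,6) l'(1,5,6)] .
  then have il: "i = l" using l l' by simp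
  have pj: "pos_col x y j \<longleftrightarrow> even (?m - l)" using pos_parity[OF comp F l(1,2,5,6)] .
  have g1: "gamma beta x y (i,j) = hat_top x y j" using gamma_val[of l beta j x y i] l il by simp
  have g2: "gamma beta x y (Suc i,j) = hat_bot x y j" using gamma_val[of l beta j x y "Suc i"] l il by simp
  show ?thesis
  proof (cases "pos_col x y j")
    case True
    then have "y j + 1 \<le> x j" by (simp add: pos_col_def)
    moreover have "(?m + 2 - i) div 2 \<le> (?m + 2 - Suc i) div 2 + 1"
    proof -
      have t: "?m + 2 - i = Suc (?m + 2 - Suc i)" using il l by simp
      have "Suc t div 2 \<le> t div 2 + 1" for t :: nat by linarith
      then show ?thesis unfolding t .
    qed
    ultimately show ?thesis using g1 g2 True unfolding pi_arr_def hat_top_def hat_bot_def by simp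
  next
    case False
    then have "x j \<le> y j" by (simp add: pos_col_def)
    moreover have "odd (?m - l)" using False pj by simp
    then obtain q where q: "?m - l = 2 * q + 1" by (rule oddE)
    then have "(?m + 2 - i) div 2 = (?m + 2 - Suc i) div 2" using il l
    proof -
      have t1: "?m + 2 - i = 2 * q + 3" using q il l by simp
      have t2: "?m + 2 - Suc i = 2 * q + 2" using q il l by simp
      show ?thesis unfolding t1 t2 by simp
    qed
    ultimately show ?thesis using g1 g2 False unfolding pi_arr_def hat_top_def hat_bot_def by simp
  qed
qed


lemma row_step_pi:
  assumes comp: "composition beta" and F: "in_F beta x y"
    and p: "(i,j) \<in> S_beta beta" and q: "(i,j') \<in> S_beta beta" and jj: "j \<le> j'"
  shows "pi_arr beta x y (i,j') \<le> pi_arr beta x y (i,j)"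
  using row_step[OF assms] unfolding pi_arr_def by simp

lemma path:
  assumes comp: "composition beta" and F: "in_F beta x y"
  shows "\<forall>i1 j1. i2 - i1 = n \<longrightarrow> (i1,j1) \<in> S_beta beta \<longrightarrow> (i2,j2) \<in> S_beta beta \<longrightarrow> i1 \<le> i2 \<longrightarrow> j1 \<le> j2
     \<longrightarrow> pi_arr beta x y (i2,j2) \<le> pi_arr beta x y (i1,j1)"
proof (induction n)
  case 0
  then show ?case using row_step_pi[OF comp F] by auto
next
  case (Suc n)
  show ?case
  proof (intro allI impI)
    fix i1 j1 assume a: "i2 - i1 = Suc n" "(i1,j1) \<in> S_beta beta" "(i2,j2) \<in> S_beta beta" "i1 \<le> i2" "j1 \<le> j2"
    let ?m = "length beta"
    let ?f = "pi_arr beta x y"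
    show "?f (i2,j2) \<le> ?f (i1,j1)"
    proof (cases "(Suc i1, j1) \<in> S_beta beta")
      case True
      have "?f (i2,j2) \<le> ?f (Suc i1, j1)" using Suc.IH a True by auto
      also have "\<dots> \<le> ?f (i1,j1)" using col_step[OF comp F a(2) True] .
      finally show ?thesis .
    next
      case False
      obtain l where l: "1 \<le> l" "l \<le> ?m" "l \<le> i1" "i1 \<le> l+1" "psum beta (l-1) < j1" "j1 \<le> psum beta l"
        using a(2)[unfolded in_S] by blast
      obtain l2 where l2: "1 \<le> l2" "l2 \<le> ?m" "l2 \<le> i2" "i2 \<le> l2+1" "psum beta (l2-1) < j2" "j2 \<le> psum beta l2"
        using a(3)[unfolded in_S] by blast
      have i1: "i1 = l + 1" using False l in_S by fastforce
      have ll: "l < l2" using i1 l2 a by simp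
      then have lm: "l < ?m" using l2 by simp
      define j' where "j' = psum beta l + 1"
      have s: "psum beta l < psum beta (Suc l)" using psum_strict[OF comp lm] .
      have "psum beta l \<le> psum beta (l2 - 1)" using ll psum_mono by simp
      then have jj2: "j' \<le> j2" using l2 j'_def by simp
      have jj1: "j1 \<le> j'" using l j'_def by simp
      have m1: "(i1, j') \<in> S_beta beta" unfolding in_S
        by (rule exI[of _ "Suc l"]) (use i1 lm s j'_def in auto)
      have m2: "(Suc i1, j') \<in> S_beta beta" unfolding in_S
        by (rule exI[of _ "Suc l"]) (use i1 lm s j'_def in auto)
      have "?f (i2,j2) \<le> ?f (Suc i1, j')" using Suc.IH a m2 jj2 by auto
      also have "\<dots> \<le> ?f (i1,j')" using col_step[OF comp F m1 m2] .
      also have "\<dots> \<le> ?f (i1,j1)" using row_step_pi[OF comp F a(2) m1 jj1] .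
      finally show ?thesis .
    qed
  qed
qed

theorem lemma4p4:
  fixes beta :: "nat list" and x y :: "nat \<Rightarrow> nat"
  assumes "composition beta"
    and "in_F beta x y"
  shows "is_S_partition (S_beta beta) (pi_arr beta x y)"
proof -
  let ?m = "length beta"
  let ?f = "pi_arr beta x y"
  have ord: "\<And>p q. p \<in> S_beta beta \<Longrightarrow> q \<in> S_beta beta \<Longrightarrow> pos_le p q \<Longrightarrow> ?f q \<le> ?f p"
    using path[OF assms] unfolding pos_le_def by fastforce
  have nn: "0 \<le> ?f p" if p: "p \<in> S_beta beta" for p
  proof -
    obtain i j where ij: "p = (i,j)" by fastforce
    obtain l where l: "1 \<le> l" "l \<le> ?m" "l \<le> i" "i \<le> l+1" "psum beta (l-1) < j" "j \<le> psum beta l"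
      using p[unfolded ij in_S] by blast
    have m1: "1 \<le> ?m" using l by simp
    have s: "psum beta (?m - 1) < psum beta ?m" using psum_strict[OF assms(1), of "?m - 1"] m1 Suc_pred'[of ?m] by (metis One_nat_def Suc_le_eq diff_less zero_less_one)
    have q: "(Suc ?m, sum_list beta) \<in> S_beta beta" unfolding in_S
      by (rule exI[of _ ?m]) (use m1 s psum_len[of beta] in auto)
    have "psum beta l \<le> psum beta ?m" using l psum_mono by simp
    then have "pos_le p (Suc ?m, sum_list beta)" using ij l psum_len[of beta] unfolding pos_le_def by simp
    then have "?f (Suc ?m, sum_list beta) \<le> ?f p" using ord p q by blast
    moreover have "0 \<le> ?f (Suc ?m, sum_list beta)" unfolding pi_arr_def by simp
    ultimately show ?thesis by simp
  qed
  show ?thesis unfolding is_S_partition_def using ord nn by blast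
qed

end
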